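(* Let $p\ge 5$ be a prime with $p\equiv 5\pmod 6$, $K$ a field of characteristic $p$, and let $c_2(r)\in\mathbb F_p[r]$ be the coefficient of $x^{2p-1}y^{p-1}z^{p-2}$ in $(x^3z+y^4+ry^2z^2+z^4)^{p-1}$. Then $c_2(r)$ has a root $r\in\overline K$ with $r\neq 0,\pm 2$ if and only if $p\ge 17$. *)

theory Defs
  imports "HOL-Algebra.Algebraic_Closure_Type"
begin

text \<open>Polynomials in x,y,z,r are represented as nested univariate polynomials:
  outermost variable x, then y, then z, innermost r (coefficients in 'a).\<close>

definition var_r :: "'a::comm_ring_1 poly poly poly poly" where
  "var_r = [:[:[:[:0, 1:]:]:]:]"

definition var_z :: "'a::comm_ring_1 poly poly poly poly" where
  "var_z = [:[:[:0, 1:]:]:]"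

definition var_y :: "'a::comm_ring_1 poly poly poly poly" where
  "var_y = [:[:0, 1:]:]"

definition var_x :: "'a::comm_ring_1 poly poly poly poly" where
  "var_x = [:0, 1:]"

definition quartic_form :: "'a::comm_ring_1 poly poly poly poly" where
  "quartic_form = var_x ^ 3 * var_z + var_y ^ 4 + var_r * var_y ^ 2 * var_z ^ 2 + var_z ^ 4"

definition c2 :: "nat \<Rightarrow> 'a::comm_ring_1 poly" where
  "c2 p = coeff (coeff (coeff (quartic_form ^ (p - 1)) (2 * p - 1)) (p - 1)) (p - 2)"

end

theory Submission
  imports Defs
begin


lemma coeff_binom_monom:
  fixes u v :: "'a::comm_ring_1"
  assumes "e > 0"
  shows "coeff ((monom u e + [:v:])^n) (e*i) = of_nat (n choose i) * u^i * v^(n-i)"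
proof -
  have "(monom u e + [:v:])^n = (\<Sum>k\<le>n. monom (of_nat (n choose k) * u^k * v^(n-k)) (e*k))"
    unfolding binomial_ring
    by (intro sum.cong refl) (simp add: monom_power poly_const_pow of_nat_poly
         flip: monom_0 add: mult_monom mult.commute)
  hence "coeff ((monom u e + [:v:])^n) (e*i) = (\<Sum>k\<le>n. if e*k = e*i then of_nat (n choose k) * u^k * v^(n-k) else 0)"
    by (simp add: coeff_sum coeff_monom)
  also have "\<dots> = (\<Sum>k\<le>n. if k = i then of_nat (n choose k) * u^k * v^(n-k) else 0)"
    using assms by (intro sum.cong refl) simp
  also have "\<dots> = of_nat (n choose i) * u^i * v^(n-i)"
    by (auto simp: sum.delta binomial_eq_0)
  finally show ?thesis .
qed


lemma quartic_eq:
  "(quartic_form :: 'a::comm_ring_1 poly poly poly poly) =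
    monom [:[:0,1:]:] 3 + [: [:[:0,1:]^4:] + monom 1 2 * (monom 1 2 + [:[:[:0,1:]:] * [:0,1:]^2:]) :]"
proof -
  have e1: "(var_x::'a poly poly poly poly)^3 * var_z = monom [:[:0,1:]:] 3"
    by (simp add: var_x_def var_z_def monom_altdef)
  have e2: "(var_y::'a poly poly poly poly) ^ 4 + var_r * var_y ^ 2 * var_z ^ 2 + var_z ^ 4
     = [: [:[:0,1:]^4:] + monom 1 2 * (monom 1 2 + [:[:[:0,1:]:] * [:0,1:]^2:]) :]"
    by (simp add: var_y_def var_r_def var_z_def monom_altdef poly_const_pow mult_to_poly algebra_simps
        flip: power_add)
  show ?thesis unfolding quartic_form_def using e1 e2 by (simp add: algebra_simps)
qed



lemma c2_formula:
  "(c2 (6*k+5) :: 'a::comm_ring_1 poly) =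
   (\<Sum>d\<le>2*k+1. of_nat ((6*k+4 choose (4*k+3)) * (2*k+1 choose d) * ((2*k+1-d) choose (k+1+d))) * [:0,1:]^(k-2*d))"
proof -
  define B :: "'a poly poly" where "B = [:0,1:]"
  define RZ :: "'a poly poly" where "RZ = [:[:0,1:]:] * B^2"
  define W :: "'a poly poly poly" where "W = monom 1 2 + [:RZ:]"
  define R0 :: "'a poly poly poly" where "R0 = [:B^4:] + monom 1 2 * W"
  define N where "N = 2*k+1"
  define C where "C = (6*k+4 choose (4*k+3))"
  have Q: "(quartic_form :: 'a poly poly poly poly) = monom [:B:] 3 + [:R0:]"
    unfolding quartic_eq B_def R0_def W_def RZ_def ..
  have L1: "coeff ((quartic_form :: 'a poly poly poly poly) ^ (6*k+4)) (3*(4*k+3))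
      = of_nat C * [:B:]^(4*k+3) * R0^N"
    unfolding Q by (subst coeff_binom_monom) (simp_all add: C_def N_def)
  have L2: "coeff (R0^N) (6*k+4) = (\<Sum>d\<le>N. of_nat (N choose d) * B^(4*d) * 
       (of_nat ((N-d) choose (k+1+d)) * RZ^(N-d-(k+1+d))))"
  proof -
    have "R0^N = (\<Sum>d\<le>N. smult (of_nat (N choose d) * B^(4*d)) (monom 1 (2*(N-d)) * W^(N-d)))"
      unfolding R0_def binomial_ring
      by (intro sum.cong refl) (simp add: poly_const_pow of_nat_poly power_mult_distrib monom_power
          mult_ac flip: smult_smult power_mult)
    hence "coeff (R0^N) (6*k+4) = (\<Sum>d\<le>N. of_nat (N choose d) * B^(4*d) * coeff (monom 1 (2*(N-d)) * W^(N-d)) (6*k+4))"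
      by (simp add: coeff_sum)
    also have "\<dots> = (\<Sum>d\<le>N. of_nat (N choose d) * B^(4*d) * coeff (W^(N-d)) (6*k+4 - 2*(N-d)))"
      by (intro sum.cong refl) (auto simp: coeff_monom_mult N_def)
    also have "\<dots> = (\<Sum>d\<le>N. of_nat (N choose d) * B^(4*d) * 
       (of_nat ((N-d) choose (k+1+d)) * RZ^(N-d-(k+1+d))))"
    proof (intro sum.cong refl)
      fix d assume "d \<in> {..N}"
      hence e: "6*k+4 - 2*(N-d) = 2*(k+1+d)" by (auto simp: N_def)
      show "of_nat (N choose d) * B^(4*d) * coeff (W^(N-d)) (6*k+4 - 2*(N-d)) =
         of_nat (N choose d) * B^(4*d) * (of_nat ((N-d) choose (k+1+d)) * RZ^(N-d-(k+1+d)))"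
        unfolding W_def e by (subst coeff_binom_monom) simp_all
    qed
    finally show ?thesis .
  qed
  have L3: "coeff (of_nat C * B^(4*k+3) * coeff (R0^N) (6*k+4)) (6*k+3) =
     (\<Sum>d\<le>N. of_nat (C * (N choose d) * ((N-d) choose (k+1+d))) * [:0,1:]^(k-2*d))"
  proof -
    have "of_nat C * B^(4*k+3) * coeff (R0^N) (6*k+4) =
       (\<Sum>d\<le>N. monom (of_nat (C * (N choose d) * ((N-d) choose (k+1+d))) * [:0,1:]^(k-2*d)) (6*k+3))"
      unfolding L2 sum_distrib_left
    proof (intro sum.cong refl)
      fix d assume "d \<in> {..N}"
      show "of_nat C * B^(4*k+3) * (of_nat (N choose d) * B^(4*d) * 
          (of_nat ((N-d) choose (k+1+d)) * RZ^(N-d-(k+1+d)))) =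
         monom (of_nat (C * (N choose d) * ((N-d) choose (k+1+d))) * [:0,1:]^(k-2*d)) (6*k+3)"
      proof (cases "2*d \<le> k")
        case True
        hence e: "N-d-(k+1+d) = k-2*d" "4*k+3 + (4*d + 2*(k-2*d)) = 6*k+3" by (auto simp: N_def)
        have cm: "\<And>x (q::'a poly poly). [:x:] * q = smult x q" by simp
        have cm2: "\<And>x (q::'a poly). [:x:] * q = smult x q" by simp
        have "of_nat C * B^(4*k+3) * (of_nat (N choose d) * B^(4*d) * 
          (of_nat ((N-d) choose (k+1+d)) * RZ^(N-d-(k+1+d)))) =
          smult (of_nat (C * (N choose d) * ((N-d) choose (k+1+d))) * [:0,1:]^(k-2*d))
            (B^(4*k+3) * (B^(4*d) * B^(2*(k-2*d))))"
          unfolding e(1) RZ_def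
          by (simp add: of_nat_poly cm cm2 smult_power power_mult_distrib poly_const_pow mult_ac flip: power_mult)
        also have "\<dots> = monom (of_nat (C * (N choose d) * ((N-d) choose (k+1+d))) * [:0,1:]^(k-2*d)) (6*k+3)"
          unfolding B_def monom_altdef by (simp only: e(2) flip: power_add)
        finally show ?thesis .
      next
        case False
        hence z: "(N-d) choose (k+1+d) = 0" by (simp add: N_def)
        show ?thesis unfolding z by simp
      qed
    qed
    thus ?thesis by (simp add: coeff_sum)
  qed
  have "c2 (6*k+5) = coeff (of_nat C * B^(4*k+3) * coeff (R0^N) (6*k+4)) (6*k+3)"
  proof -
    have A: "coeff (of_nat C * [:B:]^(4*k+3) * R0^N) (6*k+4) = of_nat C * B^(4*k+3) * coeff (R0^N) (6*k+4)"
      by (simp add: of_nat_poly poly_const_pow flip: smult_smult)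
    have e: "2 * (6*k+5) - 1 = 3*(4*k+3)" "6*k+5-1 = 6*k+4" "6*k+5-2 = 6*k+3" by auto
    show ?thesis unfolding c2_def e L1 A ..
  qed
  thus ?thesis unfolding L3 by (simp only: C_def N_def)
qed


lemma binom_not_dvd:
  assumes "prime p" "m < p" "i \<le> m"
  shows "\<not> p dvd (m choose i)"
proof
  assume "p dvd (m choose i)"
  hence "p dvd fact m" using binomial_fact_lemma[OF assms(3)] by (metis dvd_mult)
  with assms show False by (simp add: prime_dvd_fact_iff)
qed
lemma binom_id:
  "(2*j+5) * ((2*j+4) choose (j+4)) * (j+4) = ((2*j+5) choose (j+3)) * ((j+2)*(j+1))"
proof -
  define Xb where "Xb = (2*j+4) choose (j+4)"
  define Yb where "Yb = (2*j+5) choose (j+3)"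
  have hX: "Xb * fact (j+4) * fact j = (fact (2*j+4) :: nat)"
    using binomial_fact_lemma[of "j+4" "2*j+4"] by (simp add: Xb_def mult_ac)
  have hY: "Yb * fact (j+3) * fact (j+2) = (fact (2*j+5) :: nat)"
    using binomial_fact_lemma[of "j+3" "2*j+5"] by (simp add: Yb_def mult_ac numeral_eq_Suc)
  have f1: "fact (2*j+5) = (2*j+5) * (fact (2*j+4) :: nat)"
    by (simp add: numeral_eq_Suc)
  have f2: "fact (j+4) = (j+4) * (fact (j+3) :: nat)" "fact (j+2) = (j+2)*(j+1)*(fact j :: nat)"
    by (simp_all add: numeral_eq_Suc algebra_simps)
  have "((2*j+5) * Xb * (j+4)) * (fact (j+3) * fact j) = (Yb * ((j+2)*(j+1))) * (fact (j+3) * fact j)"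
  proof -
    have "((2*j+5) * Xb * (j+4)) * (fact (j+3) * fact j) = (2*j+5) * (Xb * fact (j+4) * fact j)"
      by (simp add: f2 algebra_simps)
    also have "\<dots> = Yb * fact (j+3) * fact (j+2)" using hX hY f1 by simp
    also have "\<dots> = (Yb * ((j+2)*(j+1))) * (fact (j+3) * fact j)" by (simp add: f2 algebra_simps)
    finally show ?thesis .
  qed
  hence "(2*j+5) * Xb * (j+4) = Yb * ((j+2)*(j+1))"
    by (subst (asm) mult_right_cancel) (simp_all add: fact_nonzero)
  thus ?thesis unfolding Xb_def Yb_def .
qed

lemma coeff_lin_pow:
  "coeff ([:-a,1:]^(Suc n)) n = - (a * of_nat (Suc n))" for a :: "'a::idom"
proof (induction n)
  case 0 thus ?case by simp
next
  case (Suc n)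
  have c1: "coeff ([:-a,1:]^(Suc n)) (Suc n) = 1"
    using lead_coeff_power[of "[:-a,1:]" "Suc n"] degree_linear_power[of "-a" "Suc n"] by simp
  have "[:-a,1:]^(Suc (Suc n)) = smult (-a) ([:-a,1:]^(Suc n)) + pCons 0 ([:-a,1:]^(Suc n))"
    by (simp add: mult_pCons_left)
  hence "coeff ([:-a,1:]^(Suc (Suc n))) (Suc n) = -a * coeff ([:-a,1:]^(Suc n)) (Suc n) + coeff ([:-a,1:]^(Suc n)) n"
    by simp
  thus ?case using Suc c1 by (simp add: algebra_simps)
qed

lemma of_nat_monom_poly: "(of_nat c * [:0,1:]^j :: 'a::comm_ring_1 poly) = monom (of_nat c) j"
  by (simp add: monom_altdef of_nat_poly)

lemma map_to_ac_sum:
  "map_poly to_ac (\<Sum>d\<in>A. of_nat (g d) * [:0,1:]^(h d) :: 'k::field poly) =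
   (\<Sum>d\<in>A. of_nat (g d) * [:0,1:]^(h d))"
proof (rule poly_eqI)
  fix n
  have "\<And>d. to_ac (if h d = n then of_nat (g d) else 0 :: 'k) = (if h d = n then of_nat (g d) else 0)"
    by simp
  thus "coeff (map_poly to_ac (\<Sum>d\<in>A. of_nat (g d) * [:0,1:]^(h d) :: 'k::field poly)) n =
      coeff (\<Sum>d\<in>A. of_nat (g d) * [:0,1:]^(h d)) n"
    by (simp add: coeff_map_poly coeff_sum to_ac_sum of_nat_monom_poly del: of_nat_poly)
qed

theorem proposition3p4:
  fixes p :: nat
  assumes "prime p" and "p \<ge> 5" and "p mod 6 = 5"
    and "CHAR('k::field) = p"
  shows "(\<exists>r :: 'k alg_closure. r \<noteq> 0 \<and> r \<noteq> 2 \<and> r \<noteq> -2 \<and>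
             poly (map_poly to_ac (c2 p :: 'k poly)) r = 0) \<longleftrightarrow> p \<ge> 17"
proof -
  define k where "k = p div 6"
  have pk: "p = 6*k+5" using assms(3) unfolding k_def by presburger
  define E where "E d = (6*k+4 choose (4*k+3)) * (2*k+1 choose d) * ((2*k+1-d) choose (k+1+d))" for d
  define m where "m = k div 2"
  have charK: "CHAR('k alg_closure) = p" using assms(4) by simp
  have E0: "E d = 0" if "m < d" for d
    using that unfolding E_def m_def by (simp add: binomial_eq_0)
  have Enz: "(of_nat (E d) :: 'k alg_closure) \<noteq> 0" if "d \<le> m" for d
  proof -
    have "\<not> p dvd E d" unfolding E_def using that assms(1)
      by (auto simp: prime_dvd_mult_iff binom_not_dvd pk m_def dest!: binom_not_dvd[rotated -1])
    thus ?thesis by (simp add: of_nat_eq_0_iff_char_dvd assms(4))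
  qed
  have ev: "poly (map_poly to_ac (c2 p :: 'k poly)) r = (\<Sum>d\<le>m. of_nat (E d) * r^(k-2*d))" for r
  proof -
    have "poly (map_poly to_ac (c2 p :: 'k poly)) r = (\<Sum>d\<le>2*k+1. of_nat (E d) * r^(k-2*d))"
      unfolding pk c2_formula map_to_ac_sum E_def by (simp add: poly_sum)
    also have "\<dots> = (\<Sum>d\<le>m. of_nat (E d) * r^(k-2*d))"
      by (rule sum.mono_neutral_right) (auto simp: E0 m_def)
    finally show ?thesis .
  qed
  show ?thesis
  proof
    assume "\<exists>r :: 'k alg_closure. r \<noteq> 0 \<and> r \<noteq> 2 \<and> r \<noteq> -2 \<and>
             poly (map_poly to_ac (c2 p :: 'k poly)) r = 0"
    then obtain r :: "'k alg_closure" where r: "r \<noteq> 0" "poly (map_poly to_ac (c2 p :: 'k poly)) r = 0"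
      by blast
    show "p \<ge> 17"
    proof (rule ccontr)
      assume "\<not> p \<ge> 17"
      hence "m = 0" unfolding m_def using pk by auto
      hence "of_nat (E 0) * r^k = 0" using r(2) ev[of r] by simp
      with Enz[of 0] r(1) show False by simp
    qed
  next
    assume "p \<ge> 17"
    have k2: "k \<ge> 2" using \<open>p \<ge> 17\<close> pk by simp
    hence m1: "m \<ge> 1" unfolding m_def by simp
    define \<epsilon> where "\<epsilon> = k mod 2"
    have km: "k = 2*m + \<epsilon>" unfolding m_def \<epsilon>_def by simp
    define G :: "'k alg_closure poly" where "G = (\<Sum>i\<le>m. monom (of_nat (E (m-i))) i)"
    have coeffG: "coeff G j = (if j \<le> m then of_nat (E (m-j)) else 0)" for j
      unfolding G_def by (simp add: coeff_sum coeff_monom)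
    have evG: "poly (map_poly to_ac (c2 p :: 'k poly)) r = r^\<epsilon> * poly G (r^2)" for r :: "'k alg_closure"
    proof -
      have "poly (map_poly to_ac (c2 p :: 'k poly)) r = (\<Sum>i\<le>m. of_nat (E (m-i)) * r^(k-2*(m-i)))"
        unfolding ev by (rule sum.reindex_bij_witness[where i="\<lambda>i. m-i" and j="\<lambda>i. m-i"]) auto
      also have "\<dots> = (\<Sum>i\<le>m. r^\<epsilon> * (of_nat (E (m-i)) * (r^2)^i))"
      proof (intro sum.cong refl)
        fix i assume "i \<in> {..m}"
        hence ee: "k-2*(m-i) = \<epsilon> + 2*i" using km by auto
        show "of_nat (E (m-i)) * r^(k-2*(m-i)) = r^\<epsilon> * (of_nat (E (m-i)) * (r^2)^i)"
          unfolding ee power_add power_mult by (simp add: mult_ac)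
      qed
      also have "\<dots> = r^\<epsilon> * poly G (r^2)"
        unfolding G_def by (simp add: poly_sum poly_monom sum_distrib_left)
      finally show ?thesis .
    qed
    have lcG: "coeff G m \<noteq> 0" using coeffG[of m] Enz[of 0] by simp
    hence G0: "G \<noteq> 0" by auto
    have degG: "degree G = m"
    proof (rule antisym)
      show "degree G \<le> m" by (rule degree_le) (simp add: coeffG)
      show "m \<le> degree G" using lcG by (rule le_degree)
    qed
    have leadG: "lead_coeff G = of_nat (E 0)" using coeffG[of m] degG by simp
    show "\<exists>r :: 'k alg_closure. r \<noteq> 0 \<and> r \<noteq> 2 \<and> r \<noteq> -2 \<and>
             poly (map_poly to_ac (c2 p :: 'k poly)) r = 0"
    proof (cases "\<exists>s. poly G s = 0 \<and> s \<noteq> 4")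
      case True
      then obtain s where s: "poly G s = 0" "s \<noteq> 4" by blast
      have "poly G 0 \<noteq> 0" using coeffG[of 0] Enz[of m] by (simp add: poly_0_coeff_0)
      hence s0: "s \<noteq> 0" using s by auto
      obtain r :: "'k alg_closure" where r: "r^2 = s" using nth_root_exists[of 2 s] by auto
      have "r \<noteq> 0" using r s0 by auto
      moreover have "r \<noteq> 2" "r \<noteq> -2" using r s(2) by auto
      moreover have "poly (map_poly to_ac (c2 p :: 'k poly)) r = 0" using evG[of r] r s(1) by simp
      ultimately show ?thesis by blast
    next
      case False
      obtain A where A: "size A = degree G" "G = smult (lead_coeff G) (\<Prod>x\<in>#A. [:-x, 1:])"
        using alg_closed_imp_factorization[OF G0] by blast
      have "set_mset A \<subseteq> {4}"
      proof
        fix x assume x: "x \<in> set_mset A"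
        have "poly G x = 0" using x by (subst A(2)) (auto simp: poly_prod_mset prod_mset_zero_iff)
        thus "x \<in> {4}" using False by auto
      qed
      hence "A = replicate_mset m 4" using set_mset_subset_singletonD A(1) degG by metis
      hence Gf: "G = smult (of_nat (E 0)) ([:-4,1:]^m)" using A(2) leadG by simp
      obtain t where mt: "m = Suc t" using m1 by (cases m) auto
      have "coeff G t = of_nat (E 0) * (- (4 * of_nat m))"
        unfolding Gf mt coeff_smult coeff_lin_pow ..
      moreover have "coeff G t = of_nat (E 1)" using coeffG[of t] mt by simp
      ultimately have c1: "(of_nat (E 1) :: 'k alg_closure) = of_nat (E 0) * (- (4 * of_nat m))" by simp
      obtain j where kj: "k = j + 2" using k2 le_Suc_ex by (metis add.commute)
      define C where "C = (6*k+4 choose (4*k+3))"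
      have i: "k+1 = j+3" "j+3+0 = j+3" "j+3+1 = j+4" "2*k+1 = 2*j+5" "2*j+5-0 = 2*j+5"
          "2*j+5-1 = 2*j+4" "k+2 = j+4" "k*(k-1) = (j+2)*(j+1)" using kj by auto
      have "E 1 * (k+2) = C * ((2*j+5) * ((2*j+4) choose (j+4)) * (j+4))"
        unfolding E_def C_def by (simp only: i choose_one)
      also have "\<dots> = C * (((2*j+5) choose (j+3)) * ((j+2)*(j+1)))" by (simp only: binom_id)
      also have "\<dots> = E 0 * (k*(k-1))"
        unfolding E_def C_def by (simp only: i binomial_n_0 mult_1_right)
      finally have nat_id: "E 1 * (k+2) = E 0 * (k*(k-1))" .
      hence "(of_nat (E 1) :: 'k alg_closure) * of_nat (k+2) = of_nat (E 0) * of_nat (k*(k-1))"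
        by (metis of_nat_mult)
      hence "(of_nat (E 0) :: 'k alg_closure) * (of_nat (k*(k-1)) + of_nat (4*m*(k+2))) = 0"
        unfolding c1 by (simp add: algebra_simps)
      hence "(of_nat (k*(k-1) + 4*m*(k+2)) :: 'k alg_closure) = 0"
        using Enz[of 0] by simp
      hence dv: "p dvd k*(k-1) + 4*m*(k+2)" by (simp only: of_nat_eq_0_iff_char_dvd charK)
      obtain u where mu: "m = Suc u" using mt by blast
      show ?thesis
      proof (cases "\<epsilon> = 0")
        case True
        hence eqv: "k*(k-1) + 4*m*(k+2) = 6*m*(2*m+1)" "p = 12*m+5" using km pk mu
          by (simp_all add: algebra_simps)
        from dv have "p dvd 6 * m * (2*m+1)" by (simp only: eqv(1))
        moreover have "\<not> p dvd 6" "\<not> p dvd m" "\<not> p dvd (2*m+1)"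
          using \<open>p = 12*m+5\<close> m1 by (auto dest!: dvd_imp_le)
        ultimately have False using assms(1) prime_dvd_mult_iff by metis
        thus ?thesis ..
      next
        case False
        hence "\<epsilon> = 1" unfolding \<epsilon>_def by simp
        hence eqv: "k*(k-1) + 4*m*(k+2) = 2*m*(6*m+7)" "p = 12*m+11" using km pk mu
          by (simp_all add: algebra_simps)
        from dv have "p dvd 2 * m * (6*m+7)" by (simp only: eqv(1))
        moreover have "\<not> p dvd 2" "\<not> p dvd m" "\<not> p dvd (6*m+7)"
          using \<open>p = 12*m+11\<close> m1 by (auto dest!: dvd_imp_le)
        ultimately have False using assms(1) prime_dvd_mult_iff by metis
        thus ?thesis ..
      qed
    qed
  qed
qed

end
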